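(* Consider the linear model $\mathbf{y}=\alpha\mathbf{1}_n+\mathbf{X}\boldsymbol{\beta}+\sigma\boldsymbol{\epsilon}$ and Stein's loss $L_S(\delta,\sigma^2)=\delta/\sigma^2-\log(\delta/\sigma^2)-1$. Let $\phi:[0,1]\to(0,\infty)$ be monotone nondecreasing and let $\delta_\phi=\phi(R^2)\,\mathrm{RSS}/(n-p-1)$. Suppose that, when $\boldsymbol{\epsilon}\sim N_n(\mathbf{0}_n,\mathbf{I}_n)$, $\delta_\phi$ improves on the unbiased estimator $\delta_U=\mathrm{RSS}/(n-p-1)$, i.e. $E[L_S(\delta_\phi,\sigma^2)]\le E[L_S(\delta_U,\sigma^2)]$ for all $(\alpha,\boldsymbol{\beta},\sigma^2)$. Then $\delta_\phi$ also improves on $\delta_U$ (in the same sense, for all $(\alpha,\boldsymbol{\beta},\sigma^2)$) whenever the distribution of $\boldsymbol{\epsilon}$ is any scale mixture of normals, i.e. $\boldsymbol{\epsilon}=\tau\mathbf{Z}$ with $\mathbf{Z}\sim N_n(\mathbf{0}_n,\mathbf{I}_n)$ independent of a positive random scalar $\tau$ satisfying $E[\tau^2]=1$.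
   Context: Here $\mathbf{y}\in\mathbb{R}^n$ is observed, $\alpha\in\mathbb{R}$ is an unknown intercept, $\mathbf{1}_n$ is the $n$-vector of ones, $\mathbf{X}=(\mathbf{x}_1,\dots,\mathbf{x}_p)$ is a known $n\times p$ design matrix whose columns are centered ($\mathbf{x}_i'\mathbf{1}_n=0$) and linearly independent (rank $p$), $n>p+1$, $\boldsymbol{\beta}\in\mathbb{R}^p$ is unknown, and $\sigma>0$ is unknown. With $\bar y$ the mean of the entries of $\mathbf{y}$, $\mathrm{RSS}=\|(\mathbf{I}-\mathbf{X}(\mathbf{X}'\mathbf{X})^{-1}\mathbf{X}')(\mathbf{y}-\bar y\mathbf{1}_n)\|^2$ and $R^2=\|\mathbf{X}(\mathbf{X}'\mathbf{X})^{-1}\mathbf{X}'(\mathbf{y}-\bar y\mathbf{1}_n)\|^2/\|\mathbf{y}-\bar y\mathbf{1}_n\|^2$. Equivalently, a scale mixture of normals has density $f(\boldsymbol{\epsilon}'\boldsymbol{\epsilon})$ with $f(t)=\int_0^\infty(2\pi\tau^2)^{-n/2}\exp(-t/(2\tau^2))\,g(\tau^2)\,d\tau^2$ for a mixing density $g$ of $\tau^2$ with mean $1$. *)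

theory Defs
  imports "HOL-Probability.Probability"
begin

text \<open>Vectors in R^n are rendered as real^'n (n = CARD('n)); the design matrix X is
  an n x p matrix real^'p^'n (p = CARD('p)).\<close>

definition ones :: "real^'n" where
  "ones = vec 1"

definition ybar :: "real^'n \<Rightarrow> real" where
  "ybar y = (\<Sum>i\<in>UNIV. y $ i) / real CARD('n)"

definition centered :: "real^'n \<Rightarrow> real^'n" where
  "centered y = y - ybar y *\<^sub>R ones"

definition hat :: "real^'p^'n \<Rightarrow> real^'n^'n" where
  "hat X = X ** matrix_inv (transpose X ** X) ** transpose X"

definition RSS :: "real^'p^'n \<Rightarrow> real^'n \<Rightarrow> real" where
  "RSS X y = (norm (centered y - hat X *v centered y))\<^sup>2"

definition Rsq :: "real^'p^'n \<Rightarrow> real^'n \<Rightarrow> real" where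
  "Rsq X y = (norm (hat X *v centered y))\<^sup>2 / (norm (centered y))\<^sup>2"

definition stein_loss :: "real \<Rightarrow> real \<Rightarrow> real" where
  "stein_loss d s2 = d / s2 - ln (d / s2) - 1"

definition delta_phi :: "(real \<Rightarrow> real) \<Rightarrow> real^'p^'n \<Rightarrow> real^'n \<Rightarrow> real" where
  "delta_phi \<phi> X y = \<phi> (Rsq X y) * RSS X y / (real CARD('n) - real CARD('p) - 1)"

definition delta_U :: "real^'p^'n \<Rightarrow> real^'n \<Rightarrow> real" where
  "delta_U X y = RSS X y / (real CARD('n) - real CARD('p) - 1)"

text \<open>Stein's loss is nonnegative,
  so the expectation is taken as a (possibly infinite) nonnegative integral.\<close>
definition risk :: "(real^'n) measure \<Rightarrow> (real^'n \<Rightarrow> real) \<Rightarrow> real^'p^'n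
    \<Rightarrow> real \<Rightarrow> real^'p \<Rightarrow> real \<Rightarrow> ennreal" where
  "risk P \<delta> X \<alpha> \<beta> \<sigma> =
     (\<integral>\<^sup>+ e. ennreal (stein_loss (\<delta> (\<alpha> *\<^sub>R ones + X *v \<beta> + \<sigma> *\<^sub>R e)) (\<sigma>\<^sup>2)) \<partial>P)"

definition std_normal_dens :: "real^'n \<Rightarrow> ennreal" where
  "std_normal_dens x = ennreal ((2 * pi) powr (- real CARD('n) / 2) * exp (- (norm x)\<^sup>2 / 2))"

definition std_normal_n :: "(real^'n) measure" where
  "std_normal_n = density lborel std_normal_dens"

end

theory Submission
  imports Defs
begin

declare transpose_matrix_vector[simp del] vector_transpose_matrix[simp del]

locale design =
  fixes X :: "real^'p^'n"
  assumes cc: "\<forall>j. (\<Sum>i\<in>UNIV. X $ i $ j) = 0"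
    and rk: "rank X = CARD('p)"
    and dims: "CARD('n) > CARD('p) + 1"
begin

definition "G = transpose X ** X"
definition "Gi = matrix_inv G"

lemma inner_Xv: "(X *v w) \<bullet> u = w \<bullet> (transpose X *v u)"
  by (metis dot_lmul_matrix inner_commute transpose_matrix_vector)

lemma G_inj: "inj ((*v) G)"
proof -
  have injX: "inj ((*v) X)" using rk full_rank_injective by blast
  show ?thesis unfolding inj_def
  proof (intro allI impI)
    fix a b assume "G *v a = G *v b"
    hence 0: "G *v (a - b) = 0" by (simp add: matrix_vector_mult_diff_distrib)
    have "(X *v (a - b)) \<bullet> (X *v (a - b)) = (a - b) \<bullet> (G *v (a - b))"
      by (simp add: inner_Xv G_def matrix_vector_mul_assoc)
    also have "\<dots> = 0" using 0 by simp
    finally have "X *v (a - b) = 0" by simp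
    hence "X *v a = X *v b" by (simp add: matrix_vector_mult_diff_distrib)
    thus "a = b" using injX by (meson injD)
  qed
qed

lemma G_inv: "G ** Gi = mat 1" "Gi ** G = mat 1"
proof -
  have "invertible G" using G_inj invertible_left_inverse matrix_left_invertible_injective by blast
  then have "\<exists>A'. G ** A' = mat 1 \<and> A' ** G = mat 1" unfolding invertible_def by blast
  from someI_ex[OF this] show "G ** Gi = mat 1" "Gi ** G = mat 1"
    unfolding Gi_def matrix_inv_def by auto
qed

lemma hat_eq: "hat X *v z = X *v (Gi *v (transpose X *v z))"
  by (simp only: hat_def Gi_def G_def matrix_vector_mul_assoc[symmetric])

lemma Xt_hat: "transpose X *v (hat X *v z) = transpose X *v z"
proof -
  have "transpose X *v (hat X *v z) = (G ** Gi) *v (transpose X *v z)"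
    by (simp only: hat_eq G_def matrix_vector_mul_assoc[symmetric])
  thus ?thesis by (simp add: G_inv)
qed

lemma hat_X: "hat X *v (X *v w) = X *v w"
proof -
  have "hat X *v (X *v w) = X *v ((Gi ** G) *v w)"
    by (simp only: hat_eq G_def matrix_vector_mul_assoc[symmetric])
  thus ?thesis by (simp add: G_inv)
qed

lemma Xt_ones: "transpose X *v ones = 0"
  using cc by (simp add: vec_eq_iff matrix_vector_mult_def transpose_def ones_def)

lemma hat_ones: "hat X *v ones = 0"
  by (simp add: hat_eq Xt_ones)

lemma orth: "(X *v w) \<bullet> (c - hat X *v c) = 0"
  by (simp add: inner_Xv matrix_vector_mult_diff_distrib Xt_hat)

lemma orth_hat: "(hat X *v c) \<bullet> (c - hat X *v c) = 0"
  using orth[of "Gi *v (transpose X *v c)" c] by (simp add: hat_eq)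

lemma pyth: "(norm c)\<^sup>2 = (norm (hat X *v c))\<^sup>2 + (norm (c - hat X *v c))\<^sup>2"
proof -
  have "c = hat X *v c + (c - hat X *v c)" by simp
  hence "(norm c)\<^sup>2 = (norm (hat X *v c + (c - hat X *v c)))\<^sup>2" by metis
  also have "\<dots> = (norm (hat X *v c))\<^sup>2 + (norm (c - hat X *v c))\<^sup>2"
    using orth_hat[of c] by (intro norm_add_Pythagorean) (simp add: orthogonal_def)
  finally show ?thesis .
qed

lemma mu_hat: "(X *v w) \<bullet> (hat X *v v) = (X *v w) \<bullet> v"
  by (simp add: inner_Xv Xt_hat)

end

lemma frac_range: "0 \<le> r \<Longrightarrow> 0 \<le> (q::real) \<Longrightarrow> q/(q+r) \<in> {0..1}"
  by (cases "q + r = 0") (auto simp: divide_le_eq_1)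

lemma card_pos: "real CARD('n::finite) > 0" by simp

lemma ybar_add: "ybar (a + b) = ybar a + ybar b"
  by (simp add: ybar_def sum.distrib add_divide_distrib)
lemma ybar_scale: "ybar (c *\<^sub>R a) = c * ybar a"
  by (simp add: ybar_def sum_distrib_left)
lemma ybar_ones: "ybar (ones :: real^'n::finite) = 1"
  by (simp add: ybar_def ones_def)
lemma centered_add: "centered (a + b) = centered a + centered b"
  by (simp add: centered_def ybar_add algebra_simps)
lemma centered_scale: "centered (c *\<^sub>R a) = c *\<^sub>R centered a"
  by (simp add: centered_def ybar_scale algebra_simps)
lemma centered_ones: "centered (ones :: real^'n::finite) = 0"
  by (simp add: centered_def ybar_ones)

context design begin

lemma ybar_X: "ybar (X *v w) = 0"
proof -
  have "(\<Sum>i\<in>UNIV. (X *v w) $ i) = (\<Sum>j\<in>UNIV. w $ j * (\<Sum>i\<in>UNIV. X $ i $ j))"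
    unfolding matrix_vector_mult_def by (simp add: sum_distrib_left mult.commute) (rule sum.swap)
  thus ?thesis using cc by (simp add: ybar_def)
qed

lemma centered_X: "centered (X *v w) = X *v w"
  by (simp add: centered_def ybar_X)
lemma centered_neg: "centered (- a) = - centered a"
  using centered_scale[of "-1" a] by simp

lemma hat_centered: "hat X *v centered z = hat X *v z"
  by (simp add: centered_def matrix_vector_mult_diff_distrib matrix_vector_mult_scaleR hat_ones)

lemma RSS_eq: "RSS X v = (norm (centered v - hat X *v v))\<^sup>2"
  by (simp add: RSS_def hat_centered)

lemma norm_centered: "(norm (centered v))\<^sup>2 = (norm (hat X *v v))\<^sup>2 + RSS X v"
  using pyth[of "centered v"] by (simp add: RSS_def hat_centered)

lemma Rsq_eq: "Rsq X v = (norm (hat X *v v))\<^sup>2 / ((norm (hat X *v v))\<^sup>2 + RSS X v)"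
  by (simp add: Rsq_def hat_centered norm_centered)

lemma RSS_nonneg: "RSS X v \<ge> 0" by (simp add: RSS_def)

lemma Rsq_range: "Rsq X v \<in> {0..1}"
  proof -
  have a: "RSS X v \<ge> 0" "(norm (hat X *v v))\<^sup>2 \<ge> 0" by (rule RSS_nonneg) simp
  thus ?thesis unfolding Rsq_eq by (rule frac_range)
qed

lemma RSS_shift: "RSS X (v + X *v w) = RSS X v"
  by (simp add: RSS_eq centered_add centered_X matrix_vector_right_distrib hat_X)

lemma RSS_scale: "RSS X (c *\<^sub>R v) = c\<^sup>2 * RSS X v"
proof -
  have "centered (c *\<^sub>R v) - hat X *v (c *\<^sub>R v) = c *\<^sub>R (centered v - hat X *v v)"
    by (simp add: centered_scale matrix_vector_mult_scaleR scaleR_diff_right)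
  thus ?thesis by (simp add: RSS_eq power_mult_distrib)
qed

lemma RSS_neg: "RSS X (- v) = RSS X v"
  using RSS_scale[of "-1" v] by simp

end

context design begin

lemma centered_ones_add: "centered (a *\<^sub>R ones + v) = centered v"
  by (simp add: centered_add centered_scale centered_ones)

lemma hat_ones_add: "hat X *v (a *\<^sub>R ones + v) = hat X *v v"
  by (simp add: matrix_vector_right_distrib matrix_vector_mult_scaleR hat_ones)

lemma RSS_ones: "RSS X (a *\<^sub>R ones + v) = RSS X v"
  by (simp add: RSS_eq centered_ones_add hat_ones_add)

lemma Rsq_ones: "Rsq X (a *\<^sub>R ones + v) = Rsq X v"
  by (simp add: Rsq_eq RSS_ones hat_ones_add)

lemma Rsq_scale: "c \<noteq> 0 \<Longrightarrow> Rsq X (c *\<^sub>R v) = Rsq X v"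
proof -
  assume c: "c \<noteq> 0"
  have "(norm (hat X *v (c *\<^sub>R v)))\<^sup>2 = c\<^sup>2 * (norm (hat X *v v))\<^sup>2"
    by (simp add: matrix_vector_mult_scaleR power_mult_distrib)
  thus ?thesis using c
    by (simp add: Rsq_eq RSS_scale distrib_left[symmetric])
qed

lemma y_decomp: "s \<noteq> 0 \<Longrightarrow> a *\<^sub>R ones + X *v b + s *\<^sub>R z
   = a *\<^sub>R ones + s *\<^sub>R ((1/s) *\<^sub>R (X *v b) + z)"
  by (simp add: scaleR_add_right)

lemma RSS_y: "s \<noteq> 0 \<Longrightarrow> RSS X (a *\<^sub>R ones + X *v b + s *\<^sub>R z) = s\<^sup>2 * RSS X z"
proof -
  assume s: "s \<noteq> 0"
  have "RSS X ((1/s) *\<^sub>R (X *v b) + z) = RSS X z"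
    using RSS_shift[of z "(1/s) *\<^sub>R b"] by (simp add: matrix_vector_mult_scaleR add.commute)
  thus ?thesis using s by (simp add: y_decomp RSS_ones RSS_scale)
qed

lemma Rsq_y: "s \<noteq> 0 \<Longrightarrow> Rsq X (a *\<^sub>R ones + X *v b + s *\<^sub>R z) = Rsq X ((1/s) *\<^sub>R (X *v b) + z)"
  by (simp add: y_decomp Rsq_ones Rsq_scale)

lemma RSS_zero_dim: "dim {z. RSS X z = 0} < CARD('n)"
proof -
  let ?R = "range (\<lambda>w. X *v w)"
  have sub: "{z. RSS X z = 0} \<subseteq> span (insert ones ?R)"
  proof
    fix z assume "z \<in> {z. RSS X z = 0}"
    hence "centered z = hat X *v z" by (simp add: RSS_eq)
    hence "z = X *v (Gi *v (transpose X *v z)) + ybar z *\<^sub>R ones"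
      by (simp add: centered_def hat_eq algebra_simps)
    also have "\<dots> \<in> span (insert ones ?R)"
      by (intro span_add span_scale span_base) auto
    finally show "z \<in> span (insert ones ?R)" .
  qed
  have "dim {z. RSS X z = 0} \<le> dim (insert ones ?R)"
    using dim_subset[OF sub] by simp
  also have "\<dots> \<le> dim ?R + 1" by (simp add: dim_insert)
  also have "dim ?R = CARD('p)" using rk rank_dim_range by metis
  finally show ?thesis using dims by simp
qed

end

lemma cont_ybar: "continuous_on UNIV (ybar :: real^'n::finite \<Rightarrow> real)"
  unfolding ybar_def by (intro continuous_intros) auto

lemma cont_centered: "continuous_on UNIV (centered :: real^'n::finite \<Rightarrow> real^'n)"
  unfolding centered_def by (intro continuous_intros cont_ybar)

context design begin

lemma cont_RSS: "continuous_on UNIV (RSS X)"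
  unfolding RSS_eq[abs_def] by (intro continuous_intros cont_centered)

lemma RSS_meas[measurable]: "RSS X \<in> borel_measurable borel"
  using cont_RSS by (rule borel_measurable_continuous_onI)

lemma hatq_meas[measurable]: "(\<lambda>v. (norm (hat X *v v))\<^sup>2) \<in> borel_measurable borel"
  by (intro borel_measurable_continuous_onI continuous_intros)

lemma Rsq_meas[measurable]: "Rsq X \<in> borel_measurable borel"
  unfolding Rsq_eq[abs_def] by measurable

lemma RSS_zero_null: "{z. RSS X z = 0} \<in> null_sets lborel"
proof -
  have "negligible {z. RSS X z = 0}"
    using RSS_zero_dim by (intro negligible_lowdim) simp
  hence "{z. RSS X z = 0} \<in> null_sets lebesgue" using negligible_iff_null_sets by blast
  moreover have "{z. RSS X z = 0} \<in> sets lborel" by measurable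
  ultimately show ?thesis using null_sets_completion_iff by blast
qed

lemma AE_RSS_pos: "AE z in lborel. RSS X z > 0"
proof (rule AE_I'[OF RSS_zero_null])
  show "{x \<in> space lborel. \<not> 0 < RSS X x} \<subseteq> {z. RSS X z = 0}"
    using RSS_nonneg by (auto simp: less_le)
qed

end

lemma lborel_reflect:
  fixes h :: "'a::euclidean_space \<Rightarrow> ennreal"
  assumes [measurable]: "h \<in> borel_measurable borel"
  shows "(\<integral>\<^sup>+x. h (w - x) \<partial>lborel) = (\<integral>\<^sup>+x. h x \<partial>lborel)"
proof -
  have "lborel = distr lborel borel (\<lambda>x. w - x)"
    using lborel_affine[of "-1" w] by (simp add: density_1)
  hence "(\<integral>\<^sup>+x. h x \<partial>lborel) = (\<integral>\<^sup>+x. h x \<partial>distr lborel borel (\<lambda>x. w - x))" by simp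
  also have "\<dots> = (\<integral>\<^sup>+x. h (w - x) \<partial>lborel)"
    by (subst nn_integral_distr) auto
  finally show ?thesis ..
qed

lemma lborel_shift:
  fixes h :: "'a::euclidean_space \<Rightarrow> ennreal"
  assumes [measurable]: "h \<in> borel_measurable borel"
  shows "(\<integral>\<^sup>+x. h (c + x) \<partial>lborel) = (\<integral>\<^sup>+x. h x \<partial>lborel)"
proof -
  have "(\<integral>\<^sup>+x. h x \<partial>lborel) = (\<integral>\<^sup>+x. h x \<partial>distr lborel borel ((+) c))"
    by (simp add: lborel_distr_plus)
  also have "\<dots> = (\<integral>\<^sup>+x. h (c + x) \<partial>lborel)"
    by (subst nn_integral_distr) auto
  finally show ?thesis ..
qed

definition densr :: "real^'n::finite \<Rightarrow> real" where
  "densr x = (2 * pi) powr (- real CARD('n) / 2) * exp (- (norm x)\<^sup>2 / 2)"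

lemma densr_nonneg: "densr x \<ge> 0" by (simp add: densr_def)

lemma dens_eq: "std_normal_dens x = ennreal (densr x)"
  by (simp add: std_normal_dens_def densr_def)

lemma densr_meas[measurable]: "densr \<in> borel_measurable borel"
  unfolding densr_def by measurable

lemma densr_mono: fixes x y :: "real^'n::finite"
  shows "(norm x)\<^sup>2 \<le> (norm y)\<^sup>2 \<Longrightarrow> densr y \<le> densr x"
  unfolding densr_def by (intro mult_left_mono) auto

lemma densr_neg: "densr (- x) = densr x" by (simp add: densr_def)

lemma ennreal_rearr:
  fixes a b x y :: real
  assumes "0 \<le> a" "0 \<le> b" "0 \<le> x" "0 \<le> y" "(a - b) * (x - y) \<ge> 0"
  shows "ennreal a * ennreal y + ennreal b * ennreal x \<le> ennreal a * ennreal x + ennreal b * ennreal y"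
proof -
  have "a * y + b * x \<le> a * x + b * y" using assms(5) by (simp add: algebra_simps)
  thus ?thesis using assms by (simp add: ennreal_mult[symmetric] ennreal_plus[symmetric] del: ennreal_plus)
qed

lemma frac_mono: "0 < (r::real) \<Longrightarrow> 0 \<le> q \<Longrightarrow> q \<le> q' \<Longrightarrow> q/(q+r) \<le> q'/(q'+r)"
  by (simp add: divide_simps) (simp add: algebra_simps mult_right_mono)


locale design_phi = design X for X :: "real^'p^'n" +
  fixes \<phi> :: "real \<Rightarrow> real"
  assumes phi_mono: "mono_on {0..1} \<phi>"
begin

definition "phi' x = \<phi> (max 0 (min 1 x))"

lemma phi'_mono: "mono phi'"
  unfolding mono_def phi'_def
  by (intro allI impI mono_onD[OF phi_mono]) auto

lemma phi'_meas[measurable]: "phi' \<in> borel_measurable borel"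
  using phi'_mono by (rule borel_measurable_mono)

lemma phi_Rsq: "\<phi> (Rsq X v) = phi' (Rsq X v)"
  using Rsq_range[of v] by (simp add: phi'_def)

definition "gr v = (\<phi> (Rsq X v) - \<phi> 0) * RSS X v"

lemma gr_alt: "gr = (\<lambda>v. (phi' (Rsq X v) - \<phi> 0) * RSS X v)"
  by (simp add: gr_def[abs_def] phi_Rsq)

lemma gr_meas[measurable]: "gr \<in> borel_measurable borel"
  unfolding gr_alt by measurable

lemma phi_Rsq_ge: "\<phi> 0 \<le> \<phi> (Rsq X v)"
  using Rsq_range[of v] by (intro mono_onD[OF phi_mono]) auto

lemma gr_nonneg: "gr v \<ge> 0"
  unfolding gr_def using phi_Rsq_ge[of v] RSS_nonneg[of v] by simp

lemma gr_mono:
  assumes r: "RSS X u = RSS X v" and q: "(norm (hat X *v v))\<^sup>2 \<le> (norm (hat X *v u))\<^sup>2"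
  shows "gr v \<le> gr u"
proof (cases "RSS X v = 0")
  case True thus ?thesis using r by (simp add: gr_def)
next
  case False
  hence rp: "RSS X v > 0" using RSS_nonneg[of v] by simp
  have "Rsq X v \<le> Rsq X u"
    unfolding Rsq_eq r using frac_mono[OF rp _ q] by simp
  hence "\<phi> (Rsq X v) \<le> \<phi> (Rsq X u)"
    using Rsq_range[of u] Rsq_range[of v] by (intro mono_onD[OF phi_mono]) auto
  thus ?thesis unfolding gr_def r using rp by (intro mult_right_mono) auto
qed

lemma sign_a:
  fixes \<mu> v :: "real^'n"
  shows "(norm (v - c2 *\<^sub>R \<mu>))\<^sup>2 - (norm (v - c1 *\<^sub>R \<mu>))\<^sup>2
     = (c2 - c1) * ((c1 + c2) * (\<mu> \<bullet> \<mu>) - 2 * (\<mu> \<bullet> v))"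
  by (simp add: power2_norm_eq_inner inner_diff_left inner_diff_right inner_commute algebra_simps)

lemma sign_b:
  shows "(norm (hat X *v ((c1 + c2) *\<^sub>R (X *v b) - v)))\<^sup>2 - (norm (hat X *v v))\<^sup>2
     = (c1 + c2) * ((c1 + c2) * ((X *v b) \<bullet> (X *v b)) - 2 * ((X *v b) \<bullet> v))"
proof -
  let ?w = "(c1 + c2) *\<^sub>R (X *v b)"
  have hw: "hat X *v ?w = ?w"
    using hat_X[of "(c1 + c2) *\<^sub>R b"] by (simp add: matrix_vector_mult_scaleR)
  have e: "hat X *v (?w - v) = ?w - hat X *v v"
    by (simp add: matrix_vector_mult_diff_distrib hw)
  have m: "(X *v b) \<bullet> (hat X *v v) = (X *v b) \<bullet> v" by (rule mu_hat)
  show ?thesis unfolding e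
    by (simp add: power2_norm_eq_inner inner_diff_left inner_diff_right inner_commute algebra_simps m)
qed

lemma RSS_refl: "RSS X ((c1 + c2) *\<^sub>R (X *v b) - v) = RSS X v"
proof -
  have eq: "(c1 + c2) *\<^sub>R (X *v b) - v = - v + X *v ((c1 + c2) *\<^sub>R b)"
    by (simp add: matrix_vector_mult_scaleR)
  show ?thesis by (simp only: eq RSS_shift RSS_neg)
qed

end

context design_phi begin

lemma shift_repr:
  "(\<integral>\<^sup>+z. ennreal (gr (c *\<^sub>R \<mu> + z)) \<partial>std_normal_n)
   = (\<integral>\<^sup>+v. ennreal (densr (v - c *\<^sub>R \<mu>)) * ennreal (gr v) \<partial>lborel)"
proof -
  have "(\<integral>\<^sup>+z. ennreal (gr (c *\<^sub>R \<mu> + z)) \<partial>std_normal_n)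
      = (\<integral>\<^sup>+z. ennreal (densr z) * ennreal (gr (c *\<^sub>R \<mu> + z)) \<partial>lborel)"
    unfolding std_normal_n_def
    by (subst nn_integral_density) (auto simp: dens_eq[abs_def])
  also have "\<dots> = (\<integral>\<^sup>+z. (\<lambda>v. ennreal (densr (v - c *\<^sub>R \<mu>)) * ennreal (gr v)) (c *\<^sub>R \<mu> + z) \<partial>lborel)"
    by simp
  also have "\<dots> = (\<integral>\<^sup>+v. ennreal (densr (v - c *\<^sub>R \<mu>)) * ennreal (gr v) \<partial>lborel)"
    by (rule lborel_shift) measurable
  finally show ?thesis .
qed

lemma shift_mono:
  assumes c1: "0 \<le> c1" and c12: "c1 \<le> c2"
  shows "(\<integral>\<^sup>+z. ennreal (gr (c1 *\<^sub>R (X *v b) + z)) \<partial>std_normal_n)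
       \<le> (\<integral>\<^sup>+z. ennreal (gr (c2 *\<^sub>R (X *v b) + z)) \<partial>std_normal_n)"
proof -
  define \<mu> where "\<mu> = X *v b"
  define w where "w = (c1 + c2) *\<^sub>R \<mu>"
  define d1 where "d1 v = ennreal (densr (v - c1 *\<^sub>R \<mu>))" for v
  define d2 where "d2 v = ennreal (densr (v - c2 *\<^sub>R \<mu>))" for v
  define g where "g v = ennreal (gr v)" for v
  have [measurable]: "d1 \<in> borel_measurable borel" "d2 \<in> borel_measurable borel"
    "g \<in> borel_measurable borel"
    unfolding d1_def[abs_def] d2_def[abs_def] g_def[abs_def] by measurable
  define I1 where "I1 = (\<integral>\<^sup>+v. d1 v * g v \<partial>lborel)"
  define I2 where "I2 = (\<integral>\<^sup>+v. d2 v * g v \<partial>lborel)"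
  have pt: "d1 v * g v + d2 v * g (w - v) \<le> d1 v * g (w - v) + d2 v * g v" for v
  proof -
    let ?K = "(c1 + c2) * (\<mu> \<bullet> \<mu>) - 2 * (\<mu> \<bullet> v)"
    have a: "(norm (v - c2 *\<^sub>R \<mu>))\<^sup>2 - (norm (v - c1 *\<^sub>R \<mu>))\<^sup>2 = (c2 - c1) * ?K"
      by (rule sign_a)
    have b: "(norm (hat X *v (w - v)))\<^sup>2 - (norm (hat X *v v))\<^sup>2 = (c1 + c2) * ?K"
      unfolding w_def \<mu>_def by (rule sign_b)
    have r: "RSS X (w - v) = RSS X v" unfolding w_def \<mu>_def by (rule RSS_refl)
    have "(densr (v - c1 *\<^sub>R \<mu>) - densr (v - c2 *\<^sub>R \<mu>)) * (gr (w - v) - gr v) \<ge> 0"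
    proof (cases "?K \<ge> 0")
      case True
      have "(c2 - c1) * ?K \<ge> 0" "(c1 + c2) * ?K \<ge> 0" using True c1 c12 by simp_all
      hence s1: "(norm (v - c1 *\<^sub>R \<mu>))\<^sup>2 \<le> (norm (v - c2 *\<^sub>R \<mu>))\<^sup>2"
        and s2: "(norm (hat X *v v))\<^sup>2 \<le> (norm (hat X *v (w - v)))\<^sup>2" using a b by linarith+
      have "densr (v - c2 *\<^sub>R \<mu>) \<le> densr (v - c1 *\<^sub>R \<mu>)" "gr v \<le> gr (w - v)"
        using densr_mono[OF s1] gr_mono[OF r s2] by auto
      thus ?thesis by simp
    next
      case False
      have "(c2 - c1) * ?K \<le> 0" "(c1 + c2) * ?K \<le> 0" using False c1 c12
        by (simp_all add: mult_nonneg_nonpos)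
      hence s1: "(norm (v - c2 *\<^sub>R \<mu>))\<^sup>2 \<le> (norm (v - c1 *\<^sub>R \<mu>))\<^sup>2"
        and s2: "(norm (hat X *v (w - v)))\<^sup>2 \<le> (norm (hat X *v v))\<^sup>2" using a b by linarith+
      have "densr (v - c1 *\<^sub>R \<mu>) \<le> densr (v - c2 *\<^sub>R \<mu>)" "gr (w - v) \<le> gr v"
        using densr_mono[OF s1] gr_mono[OF r[symmetric] s2] r by auto
      thus ?thesis by (simp add: mult_nonpos_nonpos)
    qed
    thus ?thesis unfolding d1_def d2_def g_def
      by (intro ennreal_rearr densr_nonneg gr_nonneg)
  qed
  have refl1: "(\<integral>\<^sup>+v. d2 v * g (w - v) \<partial>lborel) = I1"
  proof -
    have "(\<integral>\<^sup>+v. d2 v * g (w - v) \<partial>lborel) = (\<integral>\<^sup>+v. (\<lambda>u. d2 (w - u) * g u) (w - v) \<partial>lborel)"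
      by simp
    also have "\<dots> = (\<integral>\<^sup>+u. d2 (w - u) * g u \<partial>lborel)"
      by (rule lborel_reflect) measurable
    also have "\<dots> = I1" unfolding I1_def
    proof (rule nn_integral_cong)
      fix u
      have e: "w - u - c2 *\<^sub>R \<mu> = - (u - c1 *\<^sub>R \<mu>)" by (simp add: w_def algebra_simps)
      show "d2 (w - u) * g u = d1 u * g u" by (simp only: d1_def d2_def e densr_neg)
    qed
    finally show ?thesis .
  qed
  have refl2: "(\<integral>\<^sup>+v. d1 v * g (w - v) \<partial>lborel) = I2"
  proof -
    have "(\<integral>\<^sup>+v. d1 v * g (w - v) \<partial>lborel) = (\<integral>\<^sup>+v. (\<lambda>u. d1 (w - u) * g u) (w - v) \<partial>lborel)"
      by simp
    also have "\<dots> = (\<integral>\<^sup>+u. d1 (w - u) * g u \<partial>lborel)"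
      by (rule lborel_reflect) measurable
    also have "\<dots> = I2" unfolding I2_def
    proof (rule nn_integral_cong)
      fix u
      have e: "w - u - c1 *\<^sub>R \<mu> = - (u - c2 *\<^sub>R \<mu>)" by (simp add: w_def algebra_simps)
      show "d1 (w - u) * g u = d2 u * g u" by (simp only: d1_def d2_def e densr_neg)
    qed
    finally show ?thesis .
  qed
  have "I1 + I1 = I1 + (\<integral>\<^sup>+v. d2 v * g (w - v) \<partial>lborel)" using refl1 by simp
  also have "\<dots> = (\<integral>\<^sup>+v. d1 v * g v + d2 v * g (w - v) \<partial>lborel)"
    unfolding I1_def by (subst nn_integral_add) auto
  also have "\<dots> \<le> (\<integral>\<^sup>+v. d1 v * g (w - v) + d2 v * g v \<partial>lborel)"
    by (intro nn_integral_mono pt)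
  also have "\<dots> = (\<integral>\<^sup>+v. d1 v * g (w - v) \<partial>lborel) + I2"
    unfolding I2_def by (subst nn_integral_add) auto
  also have "\<dots> = I2 + I2" using refl2 by simp
  finally have "2 * I1 \<le> 2 * I2" by (simp add: mult_2)
  hence le: "I1 \<le> I2" by (subst (asm) ennreal_mult_le_mult_iff) auto
  show ?thesis
    unfolding shift_repr \<mu>_def[symmetric] using le by (simp add: I1_def I2_def d1_def d2_def g_def)
qed

end

definition fL :: "real \<Rightarrow> real" where "fL x = x - ln x - 1"

lemma fL_nonneg: "x > 0 \<Longrightarrow> fL x \<ge> 0"
  unfolding fL_def using ln_le_minus_one[of x] by simp

lemma fL_lower: "y > 0 \<Longrightarrow> y / 2 \<le> fL y + ln 2"
proof -
  assume y: "y > 0"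
  have "ln (y/2) \<le> y/2 - 1" using y by (intro ln_le_minus_one) simp
  moreover have "ln (y/2) = ln y - ln 2" using y by (simp add: ln_div)
  ultimately show ?thesis unfolding fL_def by simp
qed

context prob_space begin

lemma L:
  assumes [measurable]: "X0 \<in> borel_measurable M" "Q \<in> borel_measurable M"
    and pos: "AE z in M. X0 z > 0" and intX: "integrable M X0"
    and intL: "integrable M (\<lambda>z. ln (X0 z))"
    and q0: "0 < q0" and qb: "\<And>z. q0 \<le> Q z" "\<And>z. Q z \<le> q1" and r: "r > 0"
  shows "integrable M (\<lambda>z. Q z * X0 z)" and "integrable M (\<lambda>z. ln (Q z))"
    and "(\<integral>\<^sup>+z. ennreal (fL (r * (Q z * X0 z))) \<partial>M)
        = ennreal (r * (\<integral>z. Q z * X0 z \<partial>M) - (\<integral>z. ln (Q z) \<partial>M) - ln r - (\<integral>z. ln (X0 z) \<partial>M) - 1)"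
    and "r * (\<integral>z. Q z * X0 z \<partial>M) - (\<integral>z. ln (Q z) \<partial>M) - ln r - (\<integral>z. ln (X0 z) \<partial>M) - 1 \<ge> 0"
proof -
  have Qpos: "Q z > 0" for z using q0 qb(1)[of z] by simp
  show iQX: "integrable M (\<lambda>z. Q z * X0 z)"
  proof (rule Bochner_Integration.integrable_bound[OF integrable_mult_right[OF intX, of q1]])
    show "AE z in M. norm (Q z * X0 z) \<le> norm (q1 * X0 z)"
      using pos
    proof eventually_elim
      case (elim z)
      have "Q z * X0 z \<le> q1 * X0 z" using elim qb(2)[of z] by (intro mult_right_mono) auto
      thus ?case using elim Qpos[of z] by (simp add: abs_mult)
    qed
  qed measurable
  show iLQ: "integrable M (\<lambda>z. ln (Q z))"
  proof (rule integrable_const_bound[where B="\<bar>ln q0\<bar> + \<bar>ln q1\<bar>"])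
    show "AE z in M. norm (ln (Q z)) \<le> \<bar>ln q0\<bar> + \<bar>ln q1\<bar>"
    proof (rule AE_I2)
      fix z
      have "ln q0 \<le> ln (Q z)" "ln (Q z) \<le> ln q1" using qb[of z] q0 Qpos[of z] by auto
      thus "norm (ln (Q z)) \<le> \<bar>ln q0\<bar> + \<bar>ln q1\<bar>" by auto
    qed
  qed measurable
  define g where "g z = r * (Q z * X0 z) - ln (Q z) - ln r - ln (X0 z) - 1" for z
  have ig: "integrable M g" unfolding g_def
    using iQX iLQ intL by (intro Bochner_Integration.integrable_diff integrable_mult_right) auto
  have eqg: "AE z in M. fL (r * (Q z * X0 z)) = g z"
    using pos
  proof eventually_elim
    case (elim z)
    have "ln (r * (Q z * X0 z)) = ln r + ln (Q z) + ln (X0 z)"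
      using elim r Qpos[of z] by (simp add: ln_mult)
    thus ?case by (simp add: fL_def g_def)
  qed
  have gnn: "AE z in M. 0 \<le> g z"
    using eqg pos
  proof eventually_elim
    case (elim z) thus ?case using fL_nonneg[of "r * (Q z * X0 z)"] r Qpos[of z] by simp
  qed
  have ival: "(\<integral>z. g z \<partial>M) = r * (\<integral>z. Q z * X0 z \<partial>M) - (\<integral>z. ln (Q z) \<partial>M) - ln r - (\<integral>z. ln (X0 z) \<partial>M) - 1"
    unfolding g_def using iQX iLQ intL
    by (simp add: Bochner_Integration.integral_diff Bochner_Integration.integrable_diff prob_space)
  have "(\<integral>\<^sup>+z. ennreal (fL (r * (Q z * X0 z))) \<partial>M) = (\<integral>\<^sup>+z. ennreal (g z) \<partial>M)"
    using eqg by (intro nn_integral_cong_AE) auto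
  also have "\<dots> = ennreal (\<integral>z. g z \<partial>M)" using ig gnn by (rule nn_integral_eq_integral)
  finally show "(\<integral>\<^sup>+z. ennreal (fL (r * (Q z * X0 z))) \<partial>M)
        = ennreal (r * (\<integral>z. Q z * X0 z \<partial>M) - (\<integral>z. ln (Q z) \<partial>M) - ln r - (\<integral>z. ln (X0 z) \<partial>M) - 1)"
    by (simp add: ival)
  show "r * (\<integral>z. Q z * X0 z \<partial>M) - (\<integral>z. ln (Q z) \<partial>M) - ln r - (\<integral>z. ln (X0 z) \<partial>M) - 1 \<ge> 0"
    using integral_nonneg_AE[OF gnn] ival by simp
qed

end

lemma abstract_mixture:
  fixes N :: "'b measure" and T :: "real measure"
  assumes N: "prob_space N" and T: "prob_space T"
    and X0m[measurable]: "X0 \<in> borel_measurable N" and X0_pos: "AE z in N. X0 z > 0"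
    and P_meas[measurable]: "\<And>c. P c \<in> borel_measurable N"
    and a0: "a0 > 0" and P_lo: "\<And>c z. a0 \<le> P c z" and P_hi: "\<And>c z. P c z \<le> a1"
    and hyp: "\<And>c. c > 0 \<Longrightarrow> (\<integral>\<^sup>+z. ennreal (fL (1 * (P c z * X0 z))) \<partial>N)
                  \<le> (\<integral>\<^sup>+z. ennreal (fL (1 * (1 * X0 z))) \<partial>N)"
    and mono: "\<And>c1 c2. 0 \<le> c1 \<Longrightarrow> c1 \<le> c2 \<Longrightarrow>
        (\<integral>\<^sup>+z. ennreal ((P c1 z - a0) * X0 z) \<partial>N) \<le> (\<integral>\<^sup>+z. ennreal ((P c2 z - a0) * X0 z) \<partial>N)"
    and T_sets[measurable_cong]: "sets T = sets borel"
    and T_pos: "AE t in T. t > 0" and T_int: "integrable T (\<lambda>t. t\<^sup>2)" and T_E: "(\<integral>t. t\<^sup>2 \<partial>T) = 1"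
    and \<sigma>: "\<sigma> > 0"
    and Phi: "AE t in T. \<Phi> t = (\<integral>\<^sup>+z. ennreal (fL (t\<^sup>2 * (P (1/(\<sigma>*t)) z * X0 z))) \<partial>N)"
    and Psi: "AE t in T. \<Psi> t = (\<integral>\<^sup>+z. ennreal (fL (t\<^sup>2 * (1 * X0 z))) \<partial>N)"
  shows "(\<integral>\<^sup>+t. \<Phi> t \<partial>T) \<le> (\<integral>\<^sup>+t. \<Psi> t \<partial>T)"
proof (cases "(\<integral>\<^sup>+t. \<Psi> t \<partial>T) = \<top>")
  case True thus ?thesis by simp
next
  case False
  interpret N: prob_space N by fact
  interpret T: prob_space T by fact
  have "\<exists>t0>0. \<Psi> t0 \<noteq> \<top> \<and> \<Psi> t0 = (\<integral>\<^sup>+z. ennreal (fL (t0\<^sup>2 * (1 * X0 z))) \<partial>N)"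
  proof (rule ccontr)
    assume nt: "\<not> ?thesis"
    have "AE t in T. \<Psi> t = \<top>" using T_pos Psi by eventually_elim (use nt in auto)
    hence "(\<integral>\<^sup>+t. \<Psi> t \<partial>T) = (\<integral>\<^sup>+t. \<top> \<partial>T)" by (rule nn_integral_cong_AE)
    thus False using False by (simp add: T.emeasure_space_1)
  qed
  then obtain t0 where t0: "t0 > 0" and fin0: "(\<integral>\<^sup>+z. ennreal (fL (t0\<^sup>2 * (1 * X0 z))) \<partial>N) \<noteq> \<top>"
    by auto
  have t0sq: "t0\<^sup>2 > 0" using t0 by simp
  have ifl: "integrable N (\<lambda>z. fL (t0\<^sup>2 * (1 * X0 z)))"
  proof -
    obtain x where x: "(\<integral>\<^sup>+z. ennreal (fL (t0\<^sup>2 * (1 * X0 z))) \<partial>N) = ennreal x"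
      using fin0 by (cases "(\<integral>\<^sup>+z. ennreal (fL (t0\<^sup>2 * (1 * X0 z))) \<partial>N)") auto
    show ?thesis
    proof (rule integrableI_nn_integral_finite[OF _ _ x])
      show "AE z in N. 0 \<le> fL (t0\<^sup>2 * (1 * X0 z))" using X0_pos
        by eventually_elim (metis fL_nonneg mult_1 mult_pos_pos t0sq)
    qed (unfold fL_def, measurable)
  qed
  have iX: "integrable N X0"
  proof (rule Bochner_Integration.integrable_bound)
    show "integrable N (\<lambda>z. (2 / t0\<^sup>2) * (fL (t0\<^sup>2 * (1 * X0 z)) + ln 2))"
      using ifl by (intro integrable_mult_right Bochner_Integration.integrable_add) auto
    show "AE z in N. norm (X0 z) \<le> norm ((2 / t0\<^sup>2) * (fL (t0\<^sup>2 * (1 * X0 z)) + ln 2))"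
      using X0_pos
    proof eventually_elim
      case (elim z)
      have h: "t0\<^sup>2 * X0 z / 2 \<le> fL (t0\<^sup>2 * X0 z) + ln 2" using elim t0sq by (intro fL_lower) simp
      hence "X0 z \<le> (2 / t0\<^sup>2) * (fL (t0\<^sup>2 * X0 z) + ln 2)" using t0sq
        by (simp add: field_simps)
      moreover have "0 \<le> X0 z" using elim by simp
      ultimately show ?case by (smt (verit) real_norm_def)
    qed
  qed measurable
  have iL: "integrable N (\<lambda>z. ln (X0 z))"
  proof (rule integrable_cong_AE_imp)
    show "integrable N (\<lambda>z. t0\<^sup>2 * X0 z - ln (t0\<^sup>2) - 1 - fL (t0\<^sup>2 * (1 * X0 z)))"
      using ifl iX by (intro Bochner_Integration.integrable_diff integrable_mult_right) auto
    show "AE z in N. t0\<^sup>2 * X0 z - ln (t0\<^sup>2) - 1 - fL (t0\<^sup>2 * (1 * X0 z)) = ln (X0 z)"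
      using X0_pos
    proof eventually_elim
      case (elim z)
      thus ?case using t0sq by (simp add: fL_def ln_mult)
    qed
  qed measurable
  define EXv where "EXv = (\<integral>z. X0 z \<partial>N)"
  define EL where "EL = (\<integral>z. ln (X0 z) \<partial>N)"
  define ap where "ap c = (\<integral>z. P c z * X0 z \<partial>N)" for c
  define b where "b c = (\<integral>z. ln (P c z) \<partial>N)" for c
  note Lc = N.L[OF X0m P_meas X0_pos iX iL a0 P_lo P_hi]
  note L1 = N.L[of X0 "\<lambda>_. 1" 1 1, OF X0m borel_measurable_const X0_pos iX iL, simplified]
  have one: "(\<integral>z. 1 * X0 z \<partial>N) = EXv" "(\<integral>z. ln 1 \<partial>N) = 0" by (simp_all add: EXv_def)
  have ab: "ap c - EXv \<le> b c" if c: "c > 0" for c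
  proof -
    have "ennreal (1 * ap c - b c - ln 1 - EL - 1) \<le> ennreal (1 * EXv - 0 - ln 1 - EL - 1)"
      using hyp[OF c] Lc(3)[of 1 c] L1(3)[of 1] by (simp add: ap_def b_def EL_def EXv_def)
    moreover have "1 * EXv - 0 - ln 1 - EL - 1 \<ge> 0" using L1(4)[of 1] by (simp add: EL_def EXv_def)
    ultimately show ?thesis by simp
  qed
  have amono: "ap c1 \<le> ap c2" if "0 \<le> c1" "c1 \<le> c2" for c1 c2
  proof -
    have val: "(\<integral>\<^sup>+z. ennreal ((P c z - a0) * X0 z) \<partial>N) = ennreal (ap c - a0 * EXv)"
      and vnn: "ap c - a0 * EXv \<ge> 0" for c
    proof -
      have ii: "integrable N (\<lambda>z. (P c z - a0) * X0 z)"
        using Lc(1)[of 1 c] iX by (simp add: left_diff_distrib)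
      have nn: "AE z in N. 0 \<le> (P c z - a0) * X0 z"
        using X0_pos by eventually_elim (simp add: P_lo)
      have iv: "(\<integral>z. (P c z - a0) * X0 z \<partial>N) = ap c - a0 * EXv"
        using Lc(1)[of 1 c] iX by (simp add: left_diff_distrib ap_def EXv_def)
      show "(\<integral>\<^sup>+z. ennreal ((P c z - a0) * X0 z) \<partial>N) = ennreal (ap c - a0 * EXv)"
        using nn_integral_eq_integral[OF ii nn] iv by simp
      show "ap c - a0 * EXv \<ge> 0" using integral_nonneg_AE[OF nn] iv by simp
    qed
    have "ennreal (ap c1 - a0 * EXv) \<le> ennreal (ap c2 - a0 * EXv)"
      using mono[OF that] val by simp
    thus ?thesis using vnn[of c2] by simp
  qed
  define A0 where "A0 = ap (1/\<sigma>) - EXv"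
  define U where "U t = t\<^sup>2 * EXv - ln (t\<^sup>2) - EL - 1" for t
  have key: "t\<^sup>2 * ap (1/(\<sigma>*t)) - b (1/(\<sigma>*t)) - ln (t\<^sup>2) - EL - 1 \<le> U t + (t\<^sup>2 - 1) * A0"
    if elim: "t > 0" for t
  proof -
    let ?c = "1/(\<sigma>*t)"
    have c: "?c > 0" using elim \<sigma> by simp
    have "(t\<^sup>2 - 1) * ((ap ?c - EXv) - A0) \<le> 0"
    proof (cases "t \<ge> 1")
      case True
      hence "?c \<le> 1/\<sigma>" using \<sigma> elim by (simp add: divide_simps)
      hence "ap ?c \<le> ap (1/\<sigma>)" using c by (intro amono) auto
      moreover have "t\<^sup>2 - 1 \<ge> 0" using True by (simp add: one_le_power)
      ultimately show ?thesis by (simp add: A0_def mult_nonneg_nonpos)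
    next
      case False
      hence "1/\<sigma> \<le> ?c" using \<sigma> elim by (simp add: divide_simps)
      hence "ap (1/\<sigma>) \<le> ap ?c" using \<sigma> by (intro amono) auto
      moreover have "t\<^sup>2 - 1 \<le> 0" using False elim by (simp add: power_le_one)
      ultimately show ?thesis by (simp add: A0_def mult_nonpos_nonneg)
    qed
    moreover have "ap ?c - EXv \<le> b ?c" using ab[OF c] .
    ultimately show ?thesis unfolding U_def by (simp add: algebra_simps)
  qed
  have PhiU: "AE t in T. \<Phi> t \<le> ennreal (U t + (t\<^sup>2 - 1) * A0)"
    using T_pos Phi
  proof eventually_elim
    case (elim t)
    have tsq: "t\<^sup>2 > 0" using elim by simp
    have "\<Phi> t = ennreal (t\<^sup>2 * ap (1/(\<sigma>*t)) - b (1/(\<sigma>*t)) - ln (t\<^sup>2) - EL - 1)"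
      using elim Lc(3)[OF tsq, of "1/(\<sigma>*t)"] by (simp add: ap_def b_def EL_def)
    thus ?case using key[of t] elim by (simp add: ennreal_leI)
  qed
  have PhiU_real: "AE t in T. 0 \<le> U t + (t\<^sup>2 - 1) * A0"
    using T_pos
  proof eventually_elim
    case (elim t)
    have tsq: "t\<^sup>2 > 0" using elim by simp
    have "0 \<le> t\<^sup>2 * ap (1/(\<sigma>*t)) - b (1/(\<sigma>*t)) - ln (t\<^sup>2) - EL - 1"
      using Lc(4)[OF tsq, of "1/(\<sigma>*t)"] by (simp add: ap_def b_def EL_def)
    thus ?case using key[of t] elim by simp
  qed
  have PsiU: "AE t in T. \<Psi> t = ennreal (U t)"
    using T_pos Psi
  proof eventually_elim
    case (elim t)
    have tsq: "t\<^sup>2 > 0" using elim by simp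
    show ?case using elim L1(3)[OF tsq] by (simp add: U_def EXv_def EL_def)
  qed
  have Unn: "AE t in T. 0 \<le> U t"
    using T_pos
  proof eventually_elim
    case (elim t)
    have tsq: "t\<^sup>2 > 0" using elim by simp
    show ?case using L1(4)[OF tsq] by (simp add: U_def EXv_def EL_def)
  qed
  have [measurable]: "U \<in> borel_measurable T" unfolding U_def[abs_def] by measurable
  have PsiEq: "(\<integral>\<^sup>+t. \<Psi> t \<partial>T) = (\<integral>\<^sup>+t. ennreal (U t) \<partial>T)"
    using PsiU by (rule nn_integral_cong_AE)
  have iU: "integrable T U"
  proof -
    obtain x where x: "(\<integral>\<^sup>+t. ennreal (U t) \<partial>T) = ennreal x"
      using False PsiEq by (cases "(\<integral>\<^sup>+t. ennreal (U t) \<partial>T)") auto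
    show ?thesis by (rule integrableI_nn_integral_finite[OF _ Unn x]) measurable
  qed
  have iUA: "integrable T (\<lambda>t. U t + (t\<^sup>2 - 1) * A0)"
    using iU T_int by (intro Bochner_Integration.integrable_add integrable_mult_left
        Bochner_Integration.integrable_diff) auto
  have "(\<integral>\<^sup>+t. \<Phi> t \<partial>T) \<le> (\<integral>\<^sup>+t. ennreal (U t + (t\<^sup>2 - 1) * A0) \<partial>T)"
    using PhiU by (rule nn_integral_mono_AE)
  also have "\<dots> = ennreal (\<integral>t. U t + (t\<^sup>2 - 1) * A0 \<partial>T)"
    using iUA PhiU_real by (rule nn_integral_eq_integral)
  also have "(\<integral>t. U t + (t\<^sup>2 - 1) * A0 \<partial>T) = (\<integral>t. U t \<partial>T)"
    using iU T_int T_E by (simp add: Bochner_Integration.integrable_diff T.prob_space)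
  also have "ennreal (\<integral>t. U t \<partial>T) = (\<integral>\<^sup>+t. ennreal (U t) \<partial>T)"
    using iU Unn by (rule nn_integral_eq_integral[symmetric])
  finally show ?thesis using PsiEq by simp
qed


lemma stein_fL: "stein_loss d s2 = fL (d / s2)"
  by (simp add: stein_loss_def fL_def)

context design_phi begin

definition "mm = real CARD('n) - real CARD('p) - 1"

lemma mm_pos: "mm > 0" using dims by (simp add: mm_def)

lemma delta_phi_alt: "delta_phi \<phi> X = (\<lambda>y. phi' (Rsq X y) * RSS X y / mm)"
  by (simp add: delta_phi_def[abs_def] mm_def phi_Rsq)

lemma delta_phi_meas[measurable]: "delta_phi \<phi> X \<in> borel_measurable borel"
  unfolding delta_phi_alt by measurable

lemma delta_U_meas[measurable]: "delta_U X \<in> borel_measurable borel"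
  unfolding delta_U_def[abs_def] by measurable

lemma delta_phi_y: "s \<noteq> 0 \<Longrightarrow> delta_phi \<phi> X (a *\<^sub>R ones + X *v b + s *\<^sub>R z)
    = \<phi> (Rsq X ((1/s) *\<^sub>R (X *v b) + z)) * (s\<^sup>2 * RSS X z) / mm"
  by (simp add: delta_phi_def mm_def Rsq_y RSS_y)

lemma delta_U_y: "s \<noteq> 0 \<Longrightarrow> delta_U X (a *\<^sub>R ones + X *v b + s *\<^sub>R z) = s\<^sup>2 * RSS X z / mm"
  by (simp add: delta_U_def mm_def RSS_y)

definition "PP b c z = \<phi> (Rsq X (c *\<^sub>R (X *v b) + z))"
definition "X0 z = RSS X z / mm"

lemma PP_meas[measurable]: "PP b c \<in> borel_measurable borel"
proof -
  have "PP b c = (\<lambda>z. phi' (Rsq X (c *\<^sub>R (X *v b) + z)))"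
    by (simp add: PP_def[abs_def] phi_Rsq)
  thus ?thesis by simp
qed

lemma X0_meas[measurable]: "X0 \<in> borel_measurable borel"
  unfolding X0_def[abs_def] by measurable

lemma PP_lo: "\<phi> 0 \<le> PP b c z" unfolding PP_def by (rule phi_Rsq_ge)
lemma PP_hi: "PP b c z \<le> \<phi> 1"
  unfolding PP_def using Rsq_range by (intro mono_onD[OF phi_mono]) auto

lemma loss_phi: "s \<noteq> 0 \<Longrightarrow> stein_loss (delta_phi \<phi> X (a *\<^sub>R ones + X *v b + s *\<^sub>R z)) (\<sigma>\<^sup>2)
   = fL ((s/\<sigma>)\<^sup>2 * (PP b (1/s) z * X0 z))"
  by (simp add: delta_phi_y stein_fL PP_def X0_def power_divide mult_ac)

lemma loss_U: "s \<noteq> 0 \<Longrightarrow> stein_loss (delta_U X (a *\<^sub>R ones + X *v b + s *\<^sub>R z)) (\<sigma>\<^sup>2)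
   = fL ((s/\<sigma>)\<^sup>2 * (1 * X0 z))"
  by (simp add: delta_U_y stein_fL X0_def power_divide mult_ac)

lemma gr_shift: "gr (c *\<^sub>R (X *v b) + z) = (PP b c z - \<phi> 0) * RSS X z"
proof -
  have e: "c *\<^sub>R (X *v b) + z = z + X *v (c *\<^sub>R b)" by (simp add: matrix_vector_mult_scaleR add.commute)
  have "RSS X (c *\<^sub>R (X *v b) + z) = RSS X z" by (simp only: e RSS_shift)
  thus ?thesis by (simp add: gr_def PP_def)
qed

end

theorem theorem3p1:
  fixes X :: "real^'p^'n" and \<phi> :: "real \<Rightarrow> real"
  assumes dims: "CARD('n) > CARD('p) + 1"
    and centered_cols: "\<forall>j. (\<Sum>i\<in>UNIV. X $ i $ j) = 0"
    and full_rank: "rank X = CARD('p)"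
    and phi_pos: "\<forall>r\<in>{0..1}. \<phi> r > 0"
    and phi_mono: "mono_on {0..1} \<phi>"
    and improves_normal: "\<forall>\<alpha> \<beta> \<sigma>. \<sigma> > 0 \<longrightarrow>
        risk std_normal_n (delta_phi \<phi> X) X \<alpha> \<beta> \<sigma> \<le> risk std_normal_n (delta_U X) X \<alpha> \<beta> \<sigma>"
    and M: "prob_space M"
    and tau_meas: "(\<tau> :: 'a \<Rightarrow> real) \<in> borel_measurable M"
    and Z_normal: "distributed M lborel (Z :: 'a \<Rightarrow> real^'n) std_normal_dens"
    and indep: "\<forall>A \<in> sets (borel :: real measure). \<forall>B \<in> sets (borel :: (real^'n) measure).
        measure M ({\<omega>\<in>space M. \<tau> \<omega> \<in> A} \<inter> {\<omega>\<in>space M. Z \<omega> \<in> B})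
          = measure M {\<omega>\<in>space M. \<tau> \<omega> \<in> A} * measure M {\<omega>\<in>space M. Z \<omega> \<in> B}"
    and tau_pos: "AE \<omega> in M. \<tau> \<omega> > 0"
    and tau_sq: "integrable M (\<lambda>\<omega>. (\<tau> \<omega>)\<^sup>2)" "(\<integral>\<omega>. (\<tau> \<omega>)\<^sup>2 \<partial>M) = 1"
  shows "\<forall>\<alpha> \<beta> \<sigma>. \<sigma> > 0 \<longrightarrow>
        risk (distr M borel (\<lambda>\<omega>. \<tau> \<omega> *\<^sub>R Z \<omega>)) (delta_phi \<phi> X) X \<alpha> \<beta> \<sigma>
          \<le> risk (distr M borel (\<lambda>\<omega>. \<tau> \<omega> *\<^sub>R Z \<omega>)) (delta_U X) X \<alpha> \<beta> \<sigma>"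
proof (intro allI impI)
  fix \<alpha> :: real and \<beta> :: "real^'p" and \<sigma> :: real
  assume \<sigma>: "\<sigma> > 0"
  interpret design_phi X \<phi>
    using centered_cols full_rank dims phi_mono by unfold_locales auto
  interpret M: prob_space M by fact
  have [measurable]: "\<tau> \<in> borel_measurable M" by fact
  have Zm[measurable]: "Z \<in> borel_measurable M"
  proof -
    have "Z \<in> measurable M lborel" using Z_normal unfolding distributed_def by blast
    thus ?thesis using measurable_cong_sets[OF refl sets_lborel, of M] by blast
  qed
  let ?N = "std_normal_n :: (real^'n) measure"
  have Nsets[measurable_cong]: "sets ?N = sets borel" by (simp add: std_normal_n_def)
  have PZ: "distr M borel Z = ?N"
  proof -
    have "distr M borel Z = distr M lborel Z" by (rule distr_cong) auto
    also have "\<dots> = ?N" using Z_normal by (simp add: distributed_def std_normal_n_def)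
    finally show ?thesis .
  qed
  have N: "prob_space ?N" using M.prob_space_distr[OF Zm] PZ by simp
  interpret N: prob_space ?N by fact
  define T where "T = distr M borel \<tau>"
  have T: "prob_space T" unfolding T_def by (rule M.prob_space_distr) simp
  interpret T: prob_space T by fact
  have Tsets[measurable_cong]: "sets T = sets borel" by (simp add: T_def)
  have T_pos: "AE t in T. t > 0" unfolding T_def
    by (subst AE_distr_iff) (auto intro: tau_pos)
  have T_int: "integrable T (\<lambda>t. t\<^sup>2)" unfolding T_def
    by (subst integrable_distr_eq) (auto intro: tau_sq)
  have T_E: "(\<integral>t. t\<^sup>2 \<partial>T) = 1" unfolding T_def
    by (subst integral_distr) (auto intro: tau_sq)
  have Jt: "T \<Otimes>\<^sub>M ?N = distr M (borel \<Otimes>\<^sub>M borel) (\<lambda>\<omega>. (\<tau> \<omega>, Z \<omega>))"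
  proof (rule pair_measure_eqI)
    show "sigma_finite_measure T" "sigma_finite_measure ?N"
      by (simp_all add: T.sigma_finite_measure N.sigma_finite_measure)
    show "sets (T \<Otimes>\<^sub>M ?N) = sets (distr M (borel \<Otimes>\<^sub>M borel) (\<lambda>\<omega>. (\<tau> \<omega>, Z \<omega>)))"
      by (simp add: sets_pair_measure_cong[OF Tsets Nsets])
  next
    fix A B assume A: "A \<in> sets T" and B: "B \<in> sets ?N"
    hence Ab: "A \<in> sets borel" and Bb: "B \<in> sets borel" using Tsets Nsets by auto
    have "emeasure T A = emeasure M {\<omega>\<in>space M. \<tau> \<omega> \<in> A}"
      unfolding T_def using Ab by (subst emeasure_distr) (auto simp: vimage_def Int_def conj_commute)
    moreover have "emeasure ?N B = emeasure M {\<omega>\<in>space M. Z \<omega> \<in> B}"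
      unfolding PZ[symmetric] using Bb by (subst emeasure_distr) (auto simp: vimage_def Int_def conj_commute)
    moreover have "emeasure (distr M (borel \<Otimes>\<^sub>M borel) (\<lambda>\<omega>. (\<tau> \<omega>, Z \<omega>))) (A \<times> B)
        = emeasure M ({\<omega>\<in>space M. \<tau> \<omega> \<in> A} \<inter> {\<omega>\<in>space M. Z \<omega> \<in> B})"
      using Ab Bb by (subst emeasure_distr) (auto intro!: arg_cong2[where f=emeasure])
    ultimately show "emeasure T A * emeasure ?N B = emeasure (distr M (borel \<Otimes>\<^sub>M borel) (\<lambda>\<omega>. (\<tau> \<omega>, Z \<omega>))) (A \<times> B)"
      using indep Ab Bb by (simp add: M.emeasure_eq_measure ennreal_mult[symmetric])
  qed
  have decomp: "(\<integral>\<^sup>+e. h e \<partial>distr M borel (\<lambda>\<omega>. \<tau> \<omega> *\<^sub>R Z \<omega>)) = (\<integral>\<^sup>+t. \<integral>\<^sup>+z. h (t *\<^sub>R z) \<partial>?N \<partial>T)"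
    if [measurable]: "h \<in> borel_measurable borel" for h :: "real^'n \<Rightarrow> ennreal"
  proof -
    have "(\<integral>\<^sup>+e. h e \<partial>distr M borel (\<lambda>\<omega>. \<tau> \<omega> *\<^sub>R Z \<omega>)) = (\<integral>\<^sup>+\<omega>. h (\<tau> \<omega> *\<^sub>R Z \<omega>) \<partial>M)"
      by (subst nn_integral_distr) auto
    also have "\<dots> = (\<integral>\<^sup>+x. h (fst x *\<^sub>R snd x) \<partial>distr M (borel \<Otimes>\<^sub>M borel) (\<lambda>\<omega>. (\<tau> \<omega>, Z \<omega>)))"
      by (subst nn_integral_distr) auto
    also have "\<dots> = (\<integral>\<^sup>+x. h (fst x *\<^sub>R snd x) \<partial>(T \<Otimes>\<^sub>M ?N))" by (simp add: Jt)
    also have "\<dots> = (\<integral>\<^sup>+t. \<integral>\<^sup>+z. h (t *\<^sub>R z) \<partial>?N \<partial>T)"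
      by (subst N.nn_integral_fst[symmetric]) auto
    finally show ?thesis .
  qed
  define hP where "hP e = ennreal (stein_loss (delta_phi \<phi> X (\<alpha> *\<^sub>R ones + X *v \<beta> + \<sigma> *\<^sub>R e)) (\<sigma>\<^sup>2))" for e
  define hU where "hU e = ennreal (stein_loss (delta_U X (\<alpha> *\<^sub>R ones + X *v \<beta> + \<sigma> *\<^sub>R e)) (\<sigma>\<^sup>2))" for e
  have [measurable]: "hP \<in> borel_measurable borel" "hU \<in> borel_measurable borel"
    unfolding hP_def[abs_def] hU_def[abs_def] stein_loss_def by measurable
  have rP: "risk (distr M borel (\<lambda>\<omega>. \<tau> \<omega> *\<^sub>R Z \<omega>)) (delta_phi \<phi> X) X \<alpha> \<beta> \<sigma>
      = (\<integral>\<^sup>+t. \<integral>\<^sup>+z. hP (t *\<^sub>R z) \<partial>?N \<partial>T)"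
    unfolding risk_def hP_def[symmetric] by (rule decomp) measurable
  have rU: "risk (distr M borel (\<lambda>\<omega>. \<tau> \<omega> *\<^sub>R Z \<omega>)) (delta_U X) X \<alpha> \<beta> \<sigma>
      = (\<integral>\<^sup>+t. \<integral>\<^sup>+z. hU (t *\<^sub>R z) \<partial>?N \<partial>T)"
    unfolding risk_def hU_def[symmetric] by (rule decomp) measurable
  have X0m: "X0 \<in> borel_measurable ?N" by measurable
  have PPm: "\<And>c. PP \<beta> c \<in> borel_measurable ?N" by measurable
  have X0pos: "AE z in ?N. X0 z > 0"
  proof -
    have "AE z in lborel. 0 < std_normal_dens z \<longrightarrow> X0 z > 0"
      using AE_RSS_pos by eventually_elim (simp add: X0_def mm_pos)
    thus ?thesis unfolding std_normal_n_def
      by (subst AE_density) (auto simp: dens_eq[abs_def])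
  qed
  have a0: "\<phi> 0 > 0" using phi_pos by auto
  have hyp: "(\<integral>\<^sup>+z. ennreal (fL (1 * (PP \<beta> c z * X0 z))) \<partial>?N)
                  \<le> (\<integral>\<^sup>+z. ennreal (fL (1 * (1 * X0 z))) \<partial>?N)" if c: "c > 0" for c
  proof -
    have "risk ?N (delta_phi \<phi> X) X \<alpha> \<beta> (1/c) \<le> risk ?N (delta_U X) X \<alpha> \<beta> (1/c)"
      using improves_normal c by simp
    moreover have "risk ?N (delta_phi \<phi> X) X \<alpha> \<beta> (1/c) = (\<integral>\<^sup>+z. ennreal (fL (1 * (PP \<beta> c z * X0 z))) \<partial>?N)"
      unfolding risk_def using c by (intro nn_integral_cong) (simp add: loss_phi[of "1/c" _ _ _ "1/c"])
    moreover have "risk ?N (delta_U X) X \<alpha> \<beta> (1/c) = (\<integral>\<^sup>+z. ennreal (fL (1 * (1 * X0 z))) \<partial>?N)"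
      unfolding risk_def using c by (intro nn_integral_cong) (simp add: loss_U[of "1/c" _ _ _ "1/c"])
    ultimately show ?thesis by simp
  qed
  have gint: "(\<integral>\<^sup>+z. ennreal ((PP \<beta> c z - \<phi> 0) * X0 z) \<partial>?N)
      = (\<integral>\<^sup>+z. ennreal (gr (c *\<^sub>R (X *v \<beta>) + z)) \<partial>?N) * ennreal (1/mm)" for c
  proof -
    have "(\<integral>\<^sup>+z. ennreal ((PP \<beta> c z - \<phi> 0) * X0 z) \<partial>?N)
        = (\<integral>\<^sup>+z. ennreal (gr (c *\<^sub>R (X *v \<beta>) + z)) * ennreal (1/mm) \<partial>?N)"
      using mm_pos by (intro nn_integral_cong) (simp add: gr_shift X0_def ennreal_mult''[symmetric])
    also have "\<dots> = (\<integral>\<^sup>+z. ennreal (gr (c *\<^sub>R (X *v \<beta>) + z)) \<partial>?N) * ennreal (1/mm)"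
      by (rule nn_integral_multc) measurable
    finally show ?thesis .
  qed
  have mono: "(\<integral>\<^sup>+z. ennreal ((PP \<beta> c1 z - \<phi> 0) * X0 z) \<partial>?N) \<le> (\<integral>\<^sup>+z. ennreal ((PP \<beta> c2 z - \<phi> 0) * X0 z) \<partial>?N)"
    if "0 \<le> c1" "c1 \<le> c2" for c1 c2
    unfolding gint using shift_mono[OF that, of \<beta>] by (rule mult_right_mono) simp
  have Phi: "AE t in T. (\<integral>\<^sup>+z. hP (t *\<^sub>R z) \<partial>?N) = (\<integral>\<^sup>+z. ennreal (fL (t\<^sup>2 * (PP \<beta> (1/(\<sigma>*t)) z * X0 z))) \<partial>?N)"
    using T_pos
  proof eventually_elim
    case (elim t)
    show ?case
    proof (intro nn_integral_cong)
      fix z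
      have "hP (t *\<^sub>R z) = ennreal (stein_loss (delta_phi \<phi> X (\<alpha> *\<^sub>R ones + X *v \<beta> + (\<sigma> * t) *\<^sub>R z)) (\<sigma>\<^sup>2))"
        by (simp add: hP_def)
      also have "\<dots> = ennreal (fL (t\<^sup>2 * (PP \<beta> (1/(\<sigma>*t)) z * X0 z)))"
        using elim \<sigma> by (subst loss_phi) auto
      finally show "hP (t *\<^sub>R z) = ennreal (fL (t\<^sup>2 * (PP \<beta> (1/(\<sigma>*t)) z * X0 z)))" .
    qed
  qed
  have Psi: "AE t in T. (\<integral>\<^sup>+z. hU (t *\<^sub>R z) \<partial>?N) = (\<integral>\<^sup>+z. ennreal (fL (t\<^sup>2 * (1 * X0 z))) \<partial>?N)"
    using T_pos
  proof eventually_elim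
    case (elim t)
    show ?case
    proof (intro nn_integral_cong)
      fix z
      have "hU (t *\<^sub>R z) = ennreal (stein_loss (delta_U X (\<alpha> *\<^sub>R ones + X *v \<beta> + (\<sigma> * t) *\<^sub>R z)) (\<sigma>\<^sup>2))"
        by (simp add: hU_def)
      also have "\<dots> = ennreal (fL (t\<^sup>2 * (1 * X0 z)))"
        using elim \<sigma> by (subst loss_U) auto
      finally show "hU (t *\<^sub>R z) = ennreal (fL (t\<^sup>2 * (1 * X0 z)))" .
    qed
  qed
  show "risk (distr M borel (\<lambda>\<omega>. \<tau> \<omega> *\<^sub>R Z \<omega>)) (delta_phi \<phi> X) X \<alpha> \<beta> \<sigma>
          \<le> risk (distr M borel (\<lambda>\<omega>. \<tau> \<omega> *\<^sub>R Z \<omega>)) (delta_U X) X \<alpha> \<beta> \<sigma>"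
    unfolding rP rU
    by (rule abstract_mixture[OF N T X0m X0pos PPm a0 PP_lo PP_hi hyp mono Tsets T_pos T_int T_E \<sigma> Phi Psi])
qed


end
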